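(* Let $I\subset\mathbb{R}$ be an open interval and let $x_1,x_2,\varphi:I\to\mathbb{R}$ be smooth functions such that the curve $\gamma(u)=(x_1(u),x_2(u),\cos\varphi(u),\sin\varphi(u))$ in $\mathbb{E}^4$ is parametrized by arclength, i.e. $(x_1')^2+(x_2')^2+(\varphi')^2=1$, and such that $1-(\varphi'(u))^2\neq 0$ for all $u\in I$. Let $M$ be the surface with position vector $$X(u,v)=\big(x_1(u),\,x_2(u),\,\cos\varphi(u)\cos v-\sin\varphi(u)\sin v,\,\cos\varphi(u)\sin v+\sin\varphi(u)\cos v\big).$$ Then $M$ is flat, i.e. its Gaussian curvature vanishes identically.
   Context: The first fundamental form coefficients are $E=\langle X_u,X_u\rangle$, $F=\langle X_u,X_v\rangle$, $G=\langle X_v,X_v\rangle$, and regularity means $W^2=EG-F^2\neq 0$. The Gaussian curvature is that of the induced metric. *)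

theory Defs
  imports "HOL-Analysis.Analysis"
begin

definition smooth_on :: "real set \<Rightarrow> (real \<Rightarrow> real) \<Rightarrow> bool" where
  "smooth_on I f \<longleftrightarrow> (\<forall>k. \<forall>u\<in>I. ((deriv ^^ k) f) differentiable (at u))"

definition partial_u :: "(real \<Rightarrow> real \<Rightarrow> 'a::real_normed_vector) \<Rightarrow> real \<Rightarrow> real \<Rightarrow> 'a" where
  "partial_u X u v = vector_derivative (\<lambda>s. X s v) (at u)"

definition partial_v :: "(real \<Rightarrow> real \<Rightarrow> 'a::real_normed_vector) \<Rightarrow> real \<Rightarrow> real \<Rightarrow> 'a" where
  "partial_v X u v = vector_derivative (\<lambda>t. X u t) (at v)"

definition ffE :: "(real \<Rightarrow> real \<Rightarrow> 'a::{real_normed_vector,real_inner}) \<Rightarrow> real \<Rightarrow> real \<Rightarrow> real" where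
  "ffE X u v = inner (partial_u X u v) (partial_u X u v)"
definition ffF :: "(real \<Rightarrow> real \<Rightarrow> 'a::{real_normed_vector,real_inner}) \<Rightarrow> real \<Rightarrow> real \<Rightarrow> real" where
  "ffF X u v = inner (partial_u X u v) (partial_v X u v)"
definition ffG :: "(real \<Rightarrow> real \<Rightarrow> 'a::{real_normed_vector,real_inner}) \<Rightarrow> real \<Rightarrow> real \<Rightarrow> real" where
  "ffG X u v = inner (partial_v X u v) (partial_v X u v)"

definition det3 :: "real \<Rightarrow> real \<Rightarrow> real \<Rightarrow> real \<Rightarrow> real \<Rightarrow> real \<Rightarrow> real \<Rightarrow> real \<Rightarrow> real \<Rightarrow> real" where
  "det3 a b c d e f g h i = a*(e*i - f*h) - b*(d*i - f*g) + c*(d*h - e*g)"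

text \<open>Gaussian curvature of the induced metric E du^2 + 2F du dv + G dv^2,
  given by the Brioschi formula (it depends only on the metric).\<close>
definition gauss_curvature :: "(real \<Rightarrow> real \<Rightarrow> 'a::{real_normed_vector,real_inner}) \<Rightarrow> real \<Rightarrow> real \<Rightarrow> real" where
  "gauss_curvature X u v =
     (let E = ffE X; F = ffF X; G = ffG X;
          e = E u v; f = F u v; g = G u v;
          Eu = partial_u E u v; Ev = partial_v E u v;
          Fu = partial_u F u v; Fv = partial_v F u v;
          Gu = partial_u G u v; Gv = partial_v G u v;
          Evv = partial_v (partial_v E) u v;
          Fuv = partial_v (partial_u F) u v;
          Guu = partial_u (partial_u G) u v
      in (det3 (- Evv/2 + Fuv - Guu/2) (Eu/2) (Fu - Ev/2)
               (Fv - Gu/2) e f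
               (Gv/2) f g
          - det3 0 (Ev/2) (Gu/2)
                 (Ev/2) e f
                 (Gu/2) f g) / (e*g - f^2)^2)"

end

theory Submission
  imports Defs
begin

lemma vd_cong_open:
  assumes "open S" "x \<in> S" "\<And>y. y \<in> S \<Longrightarrow> f y = g y"
  shows "vector_derivative f (at x) = vector_derivative g (at x)"
proof -
  have "\<And>D. (f has_vector_derivative D) (at x) \<longleftrightarrow> (g has_vector_derivative D) (at x)"
    using has_vector_derivative_transform_within_open[OF _ assms(1,2)] assms(3) by metis
  then show ?thesis unfolding vector_derivative_def by simp
qed

lemma vd_const_open:
  assumes "open S" "x \<in> S" "\<And>y. y \<in> S \<Longrightarrow> f y = c"
  shows "vector_derivative f (at x) = 0"
proof -
  have "((\<lambda>y. c) has_vector_derivative 0) (at x)" by (rule derivative_intros)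
  then have "(f has_vector_derivative 0) (at x)"
    using has_vector_derivative_transform_within_open[OF _ assms(1,2)] assms(3) by metis
  then show ?thesis by (rule vector_derivative_at)
qed

lemma vector_4 [simp]:
 "(vector [x,y,z,w] ::('a::zero)^4)$1 = x"
 "(vector [x,y,z,w] ::('a::zero)^4)$2 = y"
 "(vector [x,y,z,w] ::('a::zero)^4)$3 = z"
 "(vector [x,y,z,w] ::('a::zero)^4)$4 = w"
  unfolding vector_def by simp_all

lemma vector4_axis:
  "(vector [a,b,c,d] :: real^4) = a *\<^sub>R axis 1 1 + b *\<^sub>R axis 2 1 + c *\<^sub>R axis 3 1 + d *\<^sub>R axis 4 1"
  by (simp add: vec_eq_iff forall_4 axis_def)

lemma inner4: "inner (vector [a,b,c,d] :: real^4) (vector [e,f,g,h]) = a*e+b*f+c*g+d*h"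
  by (simp add: inner_vec_def sum_4)

lemma auxE: "(z::real)^2 + c^2 = 1 \<Longrightarrow> a*a + b*b + (- q*z) * (- q*z) + (q*c) * (q*c) = a^2+b^2+q^2"
proof -
  assume h: "z^2 + c^2 = 1"
  have "(- q*z) * (- q*z) + (q*c) * (q*c) = q^2*(z^2+c^2)" by (simp add: power2_eq_square algebra_simps)
  then show ?thesis using h by (simp add: power2_eq_square)
qed
lemma auxF: "(z::real)^2 + c^2 = 1 \<Longrightarrow> a*0 + b*0 + (- q*z) * (- z) + (q*c) * c = q"
proof -
  assume h: "z^2 + c^2 = 1"
  have "(- q*z) * (- z) + (q*c) * c = q*(z^2+c^2)" by (simp add: power2_eq_square algebra_simps)
  then show ?thesis using h by simp
qed
lemma auxG: "(z::real)^2 + c^2 = 1 \<Longrightarrow> 0*0 + 0*0 + (- z) * (- z) + c*c = (1::real)"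
  by (simp add: power2_eq_square)

theorem proposition1:
  fixes I :: "real set" and x1 x2 \<phi> :: "real \<Rightarrow> real"
  assumes "open I" and "is_interval I"
    and "smooth_on I x1" and "smooth_on I x2" and "smooth_on I \<phi>"
    and "\<forall>u\<in>I. (deriv x1 u)^2 + (deriv x2 u)^2 + (deriv \<phi> u)^2 = 1"
    and "\<forall>u\<in>I. 1 - (deriv \<phi> u)^2 \<noteq> 0"
  defines "X \<equiv> (\<lambda>u v. vector [x1 u, x2 u,
                  cos (\<phi> u) * cos v - sin (\<phi> u) * sin v,
                  cos (\<phi> u) * sin v + sin (\<phi> u) * cos v] :: real^4)"
  shows "\<forall>u\<in>I. \<forall>v. gauss_curvature X u v = 0"
proof -
  have X: "X u v = vector [x1 u, x2 u, cos (\<phi> u + v), sin (\<phi> u + v)]" for u v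
    unfolding X_def by (simp add: cos_add sin_add algebra_simps)
  have dif: "f differentiable (at u)" if "smooth_on I f" "u \<in> I" for f u
    using that unfolding smooth_on_def by (metis funpow_0)
  have Xu: "partial_u X u v = vector [deriv x1 u, deriv x2 u,
      - deriv \<phi> u * sin (\<phi> u + v), deriv \<phi> u * cos (\<phi> u + v)]" if u: "u \<in> I" for u v
  proof -
    have d1: "(x1 has_real_derivative deriv x1 u) (at u)" 
      using dif[OF assms(3) u] by (simp add: DERIV_deriv_iff_real_differentiable)
    have d2: "(x2 has_real_derivative deriv x2 u) (at u)" 
      using dif[OF assms(4) u] by (simp add: DERIV_deriv_iff_real_differentiable)
    have d3: "(\<phi> has_real_derivative deriv \<phi> u) (at u)" 
      using dif[OF assms(5) u] by (simp add: DERIV_deriv_iff_real_differentiable)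
    have c: "((\<lambda>s. cos (\<phi> s + v)) has_real_derivative - deriv \<phi> u * sin (\<phi> u + v)) (at u)"
      using d3 by (auto intro!: derivative_eq_intros)
    have s: "((\<lambda>s. sin (\<phi> s + v)) has_real_derivative deriv \<phi> u * cos (\<phi> u + v)) (at u)"
      using d3 by (auto intro!: derivative_eq_intros)
    have "((\<lambda>s. X s v) has_vector_derivative vector [deriv x1 u, deriv x2 u,
      - deriv \<phi> u * sin (\<phi> u + v), deriv \<phi> u * cos (\<phi> u + v)]) (at u)"
      unfolding X vector4_axis
      using has_vector_derivative_add[OF has_vector_derivative_add[OF has_vector_derivative_add[OF
         has_vector_derivative_scaleR[OF d1 has_vector_derivative_const]
         has_vector_derivative_scaleR[OF d2 has_vector_derivative_const]]
         has_vector_derivative_scaleR[OF c has_vector_derivative_const]]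
         has_vector_derivative_scaleR[OF s has_vector_derivative_const]]
      by simp
    then show ?thesis unfolding partial_u_def by (rule vector_derivative_at)
  qed
  have Xv: "partial_v X u v = vector [0, 0, - sin (\<phi> u + v), cos (\<phi> u + v)]" for u v
  proof -
    have c: "((\<lambda>t. cos (\<phi> u + t)) has_real_derivative - sin (\<phi> u + v)) (at v)"
      by (auto intro!: derivative_eq_intros)
    have s: "((\<lambda>t. sin (\<phi> u + t)) has_real_derivative cos (\<phi> u + v)) (at v)"
      by (auto intro!: derivative_eq_intros)
    have "((\<lambda>t. X u t) has_vector_derivative vector [0, 0, - sin (\<phi> u + v), cos (\<phi> u + v)]) (at v)"
      unfolding X vector4_axis
      using has_vector_derivative_add[OF has_vector_derivative_add[OF has_vector_derivative_add[OF
         has_vector_derivative_scaleR[OF DERIV_const has_vector_derivative_const]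
         has_vector_derivative_scaleR[OF DERIV_const has_vector_derivative_const]]
         has_vector_derivative_scaleR[OF c has_vector_derivative_const]]
         has_vector_derivative_scaleR[OF s has_vector_derivative_const]]
      by simp
    then show ?thesis unfolding partial_v_def by (rule vector_derivative_at)
  qed
  have G: "ffG X = (\<lambda>u v. 1)"
    by (intro ext) (simp only: ffG_def Xv inner4 auxG[OF sin_cos_squared_add])
  have E: "ffE X u v = 1" if "u \<in> I" for u v
    unfolding ffE_def Xu[OF that] inner4 auxE[OF sin_cos_squared_add]
    using assms(6) that by simp
  have F: "ffF X u v = deriv \<phi> u" if "u \<in> I" for u v
    unfolding ffF_def Xu[OF that] Xv inner4 by (rule auxF[OF sin_cos_squared_add])
  show ?thesis
  proof (intro ballI allI)
    fix u v assume u: "u \<in> I"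
    have Gu: "partial_u (ffG X) u v = 0" for u v unfolding G partial_u_def by (rule vd_const_open[OF open_UNIV, of _ _ 1]) simp_all
    have Gv: "partial_v (ffG X) u v = 0" for u v unfolding G partial_v_def by (rule vd_const_open[OF open_UNIV, of _ _ 1]) simp_all
    have Guu: "partial_u (partial_u (ffG X)) u v = 0" unfolding partial_u_def[of "partial_u (ffG X)"]
      by (rule vd_const_open[OF open_UNIV, of _ _ 0]) (simp_all only: Gu UNIV_I)
    have Eu: "partial_u (ffE X) u v = 0" unfolding partial_u_def
      by (rule vd_const_open[OF assms(1) u]) (simp add: E)
    have Ev: "partial_v (ffE X) u t = 0" for t unfolding partial_v_def
      by (rule vd_const_open[OF open_UNIV, of t]) (simp_all add: E u)
    have Evv: "partial_v (partial_v (ffE X)) u v = 0" unfolding partial_v_def[of "partial_v (ffE X)"]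
      by (rule vd_const_open[OF open_UNIV, of v]) (simp_all add: Ev)
    have Fv: "partial_v (ffF X) u t = 0" for t unfolding partial_v_def
      by (rule vd_const_open[OF open_UNIV, of t]) (simp_all add: F u)
    have Fut: "partial_u (ffF X) u t = partial_u (ffF X) u 0" for t unfolding partial_u_def
      by (rule vd_cong_open[OF assms(1) u]) (simp add: F)
    have Fuv: "partial_v (partial_u (ffF X)) u v = 0" unfolding partial_v_def[of "partial_u (ffF X)"]
      by (rule vd_const_open[OF open_UNIV, of v _ "partial_u (ffF X) u 0"]) (simp, rule Fut)
    show "gauss_curvature X u v = 0"
      unfolding gauss_curvature_def Let_def
      by (simp add: Gu Gv Guu Eu Ev Evv Fv Fuv det3_def)
  qed
qed

end
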